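(* Let $S_1,\dots,S_m\subseteq N$. Then $\bigcap_{i=1}^m P_{S_i}=P_{\bigcap_{i=1}^m S_i}$ as subgroups of $P_n$.
   Context: $P_n$ denotes the pure braid group on $n$ strands, generated by elements $p_{a,b}$ for $1\le a<b\le n$ subject to the relations: (A) $p_{a,b}p_{a,c}p_{b,c}=p_{a,c}p_{b,c}p_{a,b}=p_{b,c}p_{a,b}p_{a,c}$ for $1\le a<b<c\le n$; (B) $p_{a,b}p_{c,d}=p_{c,d}p_{a,b}$ and $p_{a,d}p_{b,c}=p_{b,c}p_{a,d}$ for $1\le a<b<c<d\le n$; (C) $p_{a,c}p_{b,c}^{-1}p_{b,d}p_{b,c}=p_{b,c}^{-1}p_{b,d}p_{b,c}p_{a,c}$ for $1\le a<b<c<d\le n$. Let $N=\{1,\dots,n\}$. For $S\subseteq N$, $P_S$ is the subgroup of $P_n$ generated by the $p_{a,b}$ with $a\in S$ and $b\in S$ (so $P_\emptyset$ and $P_{\{a\}}$ are trivial). *)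

theory Defs
  imports "HOL-Algebra.Generated_Groups"
begin

text \<open>Pure braid group P_n given by the presentation in the paper:
  words in the letters (e,(a,b)) with 1 <= a < b <= n, where e = True stands for
  p_{a,b} and e = False for its inverse, modulo the congruence generated by free
  cancellation and the relations (A), (B), (C).\<close>

type_synonym pb_letter = "bool \<times> (nat \<times> nat)"
type_synonym pb_word = "pb_letter list"

definition pb_gens :: "nat \<Rightarrow> (nat \<times> nat) set" where
  "pb_gens n = {(a,b). 1 \<le> a \<and> a < b \<and> b \<le> n}"

definition pb_letters :: "nat \<Rightarrow> pb_letter set" where
  "pb_letters n = UNIV \<times> pb_gens n"

definition pb_words :: "nat \<Rightarrow> pb_word set" where
  "pb_words n = lists (pb_letters n)"

definition inv_letter :: "pb_letter \<Rightarrow> pb_letter" where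
  "inv_letter x = (\<not> fst x, snd x)"

abbreviation P :: "nat \<Rightarrow> nat \<Rightarrow> pb_word" where
  "P a b \<equiv> [(True, (a, b))]"

abbreviation Pinv :: "nat \<Rightarrow> nat \<Rightarrow> pb_word" where
  "Pinv a b \<equiv> [(False, (a, b))]"

definition pb_relators :: "nat \<Rightarrow> (pb_word \<times> pb_word) set" where
  "pb_relators n =
     {(P a b @ P a c @ P b c, P a c @ P b c @ P a b) | a b c. 1 \<le> a \<and> a < b \<and> b < c \<and> c \<le> n}
   \<union> {(P a c @ P b c @ P a b, P b c @ P a b @ P a c) | a b c. 1 \<le> a \<and> a < b \<and> b < c \<and> c \<le> n}
   \<union> {(P a b @ P c d, P c d @ P a b) | a b c d. 1 \<le> a \<and> a < b \<and> b < c \<and> c < d \<and> d \<le> n}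
   \<union> {(P a d @ P b c, P b c @ P a d) | a b c d. 1 \<le> a \<and> a < b \<and> b < c \<and> c < d \<and> d \<le> n}
   \<union> {(P a c @ Pinv b c @ P b d @ P b c, Pinv b c @ P b d @ P b c @ P a c) | a b c d.
        1 \<le> a \<and> a < b \<and> b < c \<and> c < d \<and> d \<le> n}"

inductive pb_eq :: "nat \<Rightarrow> pb_word \<Rightarrow> pb_word \<Rightarrow> bool" for n where
  pb_refl: "w \<in> pb_words n \<Longrightarrow> pb_eq n w w"
| pb_sym: "pb_eq n u v \<Longrightarrow> pb_eq n v u"
| pb_trans: "pb_eq n u v \<Longrightarrow> pb_eq n v w \<Longrightarrow> pb_eq n u w"
| pb_cancel: "u \<in> pb_words n \<Longrightarrow> v \<in> pb_words n \<Longrightarrow> x \<in> pb_letters n \<Longrightarrow>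
    pb_eq n (u @ [x, inv_letter x] @ v) (u @ v)"
| pb_rel: "u \<in> pb_words n \<Longrightarrow> v \<in> pb_words n \<Longrightarrow> (r, s) \<in> pb_relators n \<Longrightarrow>
    pb_eq n (u @ r @ v) (u @ s @ v)"

definition pb_rel :: "nat \<Rightarrow> (pb_word \<times> pb_word) set" where
  "pb_rel n = {(u, v). pb_eq n u v}"

definition pure_braid_group :: "nat \<Rightarrow> pb_word set monoid" where
  "pure_braid_group n =
     \<lparr> carrier = pb_words n // pb_rel n,
       mult = (\<lambda>X Y. pb_rel n `` {(SOME x. x \<in> X) @ (SOME y. y \<in> Y)}),
       one = pb_rel n `` {[]} \<rparr>"

definition pgen :: "nat \<Rightarrow> nat \<Rightarrow> nat \<Rightarrow> pb_word set" where
  "pgen n a b = pb_rel n `` {P a b}"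

definition P_sub :: "nat \<Rightarrow> nat set \<Rightarrow> pb_word set set" where
  "P_sub n S = generate (pure_braid_group n)
      {pgen n a b | a b. a \<in> S \<and> b \<in> S \<and> a < b \<and> 1 \<le> a \<and> b \<le> n}"

end

theory Submission
  imports Defs
begin

abbreviation cls :: "nat \<Rightarrow> pb_word \<Rightarrow> pb_word set" where
  "cls n w \<equiv> pb_rel n `` {w}"

lemma relators_words:
  "(r, s) \<in> pb_relators n \<Longrightarrow> r \<in> pb_words n \<and> s \<in> pb_words n"
  unfolding pb_relators_def pb_words_def pb_letters_def pb_gens_def
  by auto

lemma pb_eq_words:
  "pb_eq n u v \<Longrightarrow> u \<in> pb_words n \<and> v \<in> pb_words n"
proof (induction rule: pb_eq.induct)
  case (pb_cancel u v x)
  then show ?case by (auto simp: pb_words_def pb_letters_def inv_letter_def)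
next
  case (pb_rel u v r s)
  then show ?case using relators_words[OF pb_rel(3)] by (auto simp: pb_words_def)
qed auto

lemma equiv_pb: "equiv (pb_words n) (pb_rel n)"
  unfolding equiv_def refl_on_def sym_def trans_def pb_rel_def
  using pb_eq_words by (auto intro: pb_eq.intros)

lemma cls_eq_iff:
  "u \<in> pb_words n \<Longrightarrow> v \<in> pb_words n \<Longrightarrow> cls n u = cls n v \<longleftrightarrow> pb_eq n u v"
  using eq_equiv_class_iff[OF equiv_pb, of u n v] by (simp add: pb_rel_def)

lemma mem_cls: "x \<in> cls n u \<longleftrightarrow> pb_eq n u x"
  by (simp add: pb_rel_def)

lemma pb_eq_app_r:
  "pb_eq n u u' \<Longrightarrow> v \<in> pb_words n \<Longrightarrow> pb_eq n (u @ v) (u' @ v)"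
proof (induction rule: pb_eq.induct)
  case (pb_refl w)
  then show ?case by (auto intro: pb_eq.intros simp: pb_words_def)
next
  case (pb_cancel u v0 x)
  then show ?case using pb_eq.pb_cancel[of u n "v0 @ v" x] by (auto simp: pb_words_def)
next
  case (pb_rel u v0 r s)
  then show ?case using pb_eq.pb_rel[of u n "v0 @ v" r s] by (auto simp: pb_words_def)
qed (auto intro: pb_eq.intros)

lemma pb_eq_app_l:
  "pb_eq n v v' \<Longrightarrow> u \<in> pb_words n \<Longrightarrow> pb_eq n (u @ v) (u @ v')"
proof (induction rule: pb_eq.induct)
  case (pb_refl w)
  then show ?case by (auto intro: pb_eq.intros simp: pb_words_def)
next
  case (pb_cancel u0 v0 x)
  then show ?case using pb_eq.pb_cancel[of "u @ u0" n v0 x] by (auto simp: pb_words_def)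
next
  case (pb_rel u0 v0 r s)
  then show ?case using pb_eq.pb_rel[of "u @ u0" n v0 r s] by (auto simp: pb_words_def)
qed (auto intro: pb_eq.intros)

lemma pb_eq_app:
  "pb_eq n u u' \<Longrightarrow> pb_eq n v v' \<Longrightarrow> pb_eq n (u @ v) (u' @ v')"
  by (meson pb_eq.pb_trans pb_eq_app_l pb_eq_app_r pb_eq_words)

lemma some_cls: "u \<in> pb_words n \<Longrightarrow> pb_eq n u (SOME x. x \<in> cls n u)"
proof -
  assume "u \<in> pb_words n"
  then have "u \<in> cls n u" by (simp add: pb_rel_def pb_eq.pb_refl)
  then have "(SOME x. x \<in> cls n u) \<in> cls n u" by (rule someI)
  then show ?thesis by (simp add: pb_rel_def)
qed

lemma mult_cls:
  "u \<in> pb_words n \<Longrightarrow> v \<in> pb_words n \<Longrightarrow>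
   cls n u \<otimes>\<^bsub>pure_braid_group n\<^esub> cls n v = cls n (u @ v)"
proof -
  assume u: "u \<in> pb_words n" and v: "v \<in> pb_words n"
  have "pb_eq n (u @ v) ((SOME x. x \<in> cls n u) @ (SOME x. x \<in> cls n v))"
    using pb_eq_app[OF some_cls[OF u] some_cls[OF v]] .
  then have "pb_eq n ((SOME x. x \<in> cls n u) @ (SOME x. x \<in> cls n v)) (u @ v)"
    by (rule pb_eq.pb_sym)
  then have "cls n ((SOME x. x \<in> cls n u) @ (SOME x. x \<in> cls n v)) = cls n (u @ v)"
    using cls_eq_iff pb_eq_words by blast
  then show ?thesis by (simp add: pure_braid_group_def)
qed

lemma carrier_pb: "carrier (pure_braid_group n) = {cls n w | w. w \<in> pb_words n}"
  by (auto simp: pure_braid_group_def quotient_def)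

lemma one_pb: "\<one>\<^bsub>pure_braid_group n\<^esub> = cls n []"
  by (simp add: pure_braid_group_def)

definition winv :: "pb_word \<Rightarrow> pb_word" where
  "winv w = rev (map inv_letter w)"

lemma winv_words: "w \<in> pb_words n \<Longrightarrow> winv w \<in> pb_words n"
  by (force simp: winv_def pb_words_def pb_letters_def inv_letter_def)

lemma winv_eq: "w \<in> pb_words n \<Longrightarrow> pb_eq n (winv w @ w) []"
proof (induction w)
  case Nil
  then show ?case by (simp add: winv_def pb_refl pb_words_def)
next
  case (Cons x w)
  have xw: "x \<in> pb_letters n" "w \<in> pb_words n" using Cons.prems by (auto simp: pb_words_def)
  have il: "inv_letter x \<in> pb_letters n" "inv_letter (inv_letter x) = x"
    using xw by (auto simp: pb_letters_def inv_letter_def)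
  have "pb_eq n (winv w @ [inv_letter x, inv_letter (inv_letter x)] @ w) (winv w @ w)"
    by (rule pb_cancel) (use winv_words xw il in auto)
  then have "pb_eq n (winv (x # w) @ (x # w)) (winv w @ w)"
    using il by (simp add: winv_def)
  then show ?case using Cons.IH xw pb_trans by blast
qed

lemma app_words: "u \<in> pb_words n \<Longrightarrow> v \<in> pb_words n \<Longrightarrow> u @ v \<in> pb_words n"
  by (simp add: pb_words_def)

lemma group_pb: "group (pure_braid_group n)"
proof (rule groupI)
  fix x y assume "x \<in> carrier (pure_braid_group n)" "y \<in> carrier (pure_braid_group n)"
  then obtain u v where "u \<in> pb_words n" "v \<in> pb_words n" "x = cls n u" "y = cls n v"
    unfolding carrier_pb by blast
  then show "x \<otimes>\<^bsub>pure_braid_group n\<^esub> y \<in> carrier (pure_braid_group n)"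
    unfolding carrier_pb using mult_cls app_words by blast
next
  show "\<one>\<^bsub>pure_braid_group n\<^esub> \<in> carrier (pure_braid_group n)"
    unfolding carrier_pb one_pb by (auto simp: pb_words_def)
next
  fix x y z assume "x \<in> carrier (pure_braid_group n)" "y \<in> carrier (pure_braid_group n)"
    "z \<in> carrier (pure_braid_group n)"
  then obtain u v w where "u \<in> pb_words n" "v \<in> pb_words n" "w \<in> pb_words n"
    "x = cls n u" "y = cls n v" "z = cls n w"
    unfolding carrier_pb by blast
  then show "x \<otimes>\<^bsub>pure_braid_group n\<^esub> y \<otimes>\<^bsub>pure_braid_group n\<^esub> z =
      x \<otimes>\<^bsub>pure_braid_group n\<^esub> (y \<otimes>\<^bsub>pure_braid_group n\<^esub> z)"
    by (simp add: mult_cls app_words)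
next
  fix x assume "x \<in> carrier (pure_braid_group n)"
  then obtain u where "u \<in> pb_words n" "x = cls n u" unfolding carrier_pb by blast
  then show "\<one>\<^bsub>pure_braid_group n\<^esub> \<otimes>\<^bsub>pure_braid_group n\<^esub> x = x"
    unfolding one_pb using mult_cls[of "[]" n u] by (simp add: pb_words_def)
next
  fix x assume "x \<in> carrier (pure_braid_group n)"
  then obtain w where w: "w \<in> pb_words n" "x = cls n w" unfolding carrier_pb by blast
  have iw: "winv w \<in> pb_words n" using w(1) by (rule winv_words)
  have "cls n (winv w @ w) = cls n []"
    using cls_eq_iff[OF app_words[OF iw w(1)], of "[]"] winv_eq[OF w(1)] by (simp add: pb_words_def)
  then have "cls n (winv w) \<otimes>\<^bsub>pure_braid_group n\<^esub> x = \<one>\<^bsub>pure_braid_group n\<^esub>"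
    using w iw by (simp add: mult_cls one_pb)
  moreover have "cls n (winv w) \<in> carrier (pure_braid_group n)"
    using iw unfolding carrier_pb by blast
  ultimately show "\<exists>y \<in> carrier (pure_braid_group n). y \<otimes>\<^bsub>pure_braid_group n\<^esub> x = \<one>\<^bsub>pure_braid_group n\<^esub>"
    by blast
qed

definition inS :: "nat set \<Rightarrow> pb_letter \<Rightarrow> bool" where
  "inS S x \<longleftrightarrow> fst (snd x) \<in> S \<and> snd (snd x) \<in> S"

definition W :: "nat \<Rightarrow> nat set \<Rightarrow> pb_word set set" where
  "W n S = {cls n w | w. w \<in> pb_words n \<and> (\<forall>x \<in> set w. inS S x)}"

lemma inv_pgen:
  assumes "(a, b) \<in> pb_gens n"
  shows "inv\<^bsub>pure_braid_group n\<^esub> (pgen n a b) = cls n (Pinv a b)"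
proof -
  interpret group "pure_braid_group n" by (rule group_pb)
  have w: "P a b \<in> pb_words n" "Pinv a b \<in> pb_words n"
    using assms by (auto simp: pb_words_def pb_letters_def)
  have e: "pb_eq n (Pinv a b @ P a b) []"
    using winv_eq[OF w(1)] by (simp add: winv_def inv_letter_def)
  have "cls n (Pinv a b) \<otimes>\<^bsub>pure_braid_group n\<^esub> pgen n a b = \<one>\<^bsub>pure_braid_group n\<^esub>"
    unfolding pgen_def one_pb using w e
    by (simp add: mult_cls cls_eq_iff pb_words_def del: append.simps)
  moreover have "pgen n a b \<in> carrier (pure_braid_group n)" "cls n (Pinv a b) \<in> carrier (pure_braid_group n)"
    using w by (auto simp: carrier_pb pgen_def)
  ultimately show ?thesis using inv_equality by blast
qed

lemma P_sub_W: "P_sub n S = W n S"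
proof
  show "P_sub n S \<subseteq> W n S"
  proof
    fix X assume "X \<in> P_sub n S"
    then show "X \<in> W n S" unfolding P_sub_def
    proof (induction rule: generate.induct)
      case one
      then show ?case by (auto simp: W_def one_pb pb_words_def)
    next
      case (incl h)
      then obtain a b where h: "h = pgen n a b" "a \<in> S" "b \<in> S" "a < b" "1 \<le> a" "b \<le> n" by blast
      then show ?case unfolding W_def pgen_def
        by (intro CollectI exI[of _ "P a b"]) (auto simp: pb_words_def pb_letters_def pb_gens_def inS_def)
    next
      case (inv h)
      then obtain a b where h: "h = pgen n a b" "a \<in> S" "b \<in> S" "a < b" "1 \<le> a" "b \<le> n" by blast
      then have g: "(a, b) \<in> pb_gens n" by (auto simp: pb_gens_def)
      show ?case unfolding h inv_pgen[OF g] W_def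
        by (intro CollectI exI[of _ "Pinv a b"]) (use g h in \<open>auto simp: pb_words_def pb_letters_def inS_def\<close>)
    next
      case (eng h1 h2)
      then obtain u v where "h1 = cls n u" "u \<in> pb_words n" "\<forall>x \<in> set u. inS S x"
        "h2 = cls n v" "v \<in> pb_words n" "\<forall>x \<in> set v. inS S x" by (auto simp: W_def)
      then show ?case unfolding W_def
        by (intro CollectI exI[of _ "u @ v"]) (auto simp: mult_cls pb_words_def)
    qed
  qed
next
  show "W n S \<subseteq> P_sub n S"
  proof
    fix X assume "X \<in> W n S"
    then obtain w where w: "X = cls n w" "w \<in> pb_words n" "\<forall>x \<in> set w. inS S x" by (auto simp: W_def)
    have "cls n w \<in> P_sub n S" using w(2,3)
    proof (induction w)
      case Nil
      then show ?case unfolding P_sub_def one_pb[symmetric] using generate.one by blast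
    next
      case (Cons x w)
      obtain e a b where x: "x = (e, (a, b))" by (cases x) auto
      have g: "(a, b) \<in> pb_gens n" "a \<in> S" "b \<in> S" using Cons.prems x
        by (auto simp: pb_words_def pb_letters_def inS_def)
      have ww: "w \<in> pb_words n" "[x] \<in> pb_words n" using Cons.prems by (auto simp: pb_words_def)
      have gen: "pgen n a b \<in> {pgen n a b | a b. a \<in> S \<and> b \<in> S \<and> a < b \<and> 1 \<le> a \<and> b \<le> n}"
        using g by (auto simp: pb_gens_def)
      have "cls n [x] \<in> P_sub n S"
      proof (cases e)
        case True
        then show ?thesis unfolding P_sub_def using generate.incl[OF gen] x by (simp add: pgen_def)
      next
        case False
        then show ?thesis unfolding P_sub_def using generate.inv[OF gen, where G="pure_braid_group n"] x by (simp add: inv_pgen[OF g(1)])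
      qed
      moreover have "cls n w \<in> P_sub n S" using Cons by (auto simp: pb_words_def)
      ultimately have "cls n [x] \<otimes>\<^bsub>pure_braid_group n\<^esub> cls n w \<in> P_sub n S"
        unfolding P_sub_def by (rule generate.eng)
      then show ?case using mult_cls[OF ww(2) ww(1)] by simp
    qed
    then show "X \<in> P_sub n S" using w by simp
  qed
qed


lemma relator_filter:
  assumes "(r, s) \<in> pb_relators n"
  shows "(filter (inS S) r = r \<and> filter (inS S) s = s) \<or> filter (inS S) r = filter (inS S) s
    \<or> (\<exists>a b c. filter (inS S) r = P a c @ [(False, (b, c)), (True, (b, c))] \<and>
          filter (inS S) s = [(False, (b, c)), (True, (b, c))] @ P a c \<and>
          (a, c) \<in> pb_gens n \<and> (b, c) \<in> pb_gens n)"
  using assms unfolding pb_relators_def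
  by (elim UnE CollectE exE conjE) (auto simp: inS_def pb_gens_def)

lemma filter_words: "w \<in> pb_words n \<Longrightarrow> filter p w \<in> pb_words n"
  by (auto simp: pb_words_def)

lemma pb_eq_filter: "pb_eq n u v \<Longrightarrow> pb_eq n (filter (inS S) u) (filter (inS S) v)"
proof (induction rule: pb_eq.induct)
  case (pb_refl w)
  then show ?case by (simp add: filter_words pb_eq.pb_refl)
next
  case (pb_sym u v)
  then show ?case by (blast intro: pb_eq.pb_sym)
next
  case (pb_trans u v w)
  then show ?case by (blast intro: pb_eq.pb_trans)
next
  case (pb_cancel u v x)
  have ix: "inS S (inv_letter x) = inS S x" by (simp add: inS_def inv_letter_def)
  show ?case
  proof (cases "inS S x")
    case True
    then show ?thesis using ix pb_eq.pb_cancel[OF filter_words[OF pb_cancel(1)] filter_words[OF pb_cancel(2)] pb_cancel(3)]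
      by simp
  next
    case False
    have "filter (inS S) u @ filter (inS S) v \<in> pb_words n"
      using pb_cancel(1,2) by (auto simp: pb_words_def)
    then show ?thesis using ix False by (simp add: pb_eq.pb_refl)
  qed
next
  case (pb_rel u v r s)
  let ?u = "filter (inS S) u" and ?v = "filter (inS S) v"
  have uv: "?u \<in> pb_words n" "?v \<in> pb_words n" using pb_rel(1,2) by (auto intro: filter_words)
  from relator_filter[OF pb_rel(3), of S] show ?case
  proof (elim disjE)
    assume "filter (inS S) r = r \<and> filter (inS S) s = s"
    then show ?thesis using pb_eq.pb_rel[OF filter_words[OF pb_rel(1)] filter_words[OF pb_rel(2)] pb_rel(3)]
      by simp
  next
    assume e: "filter (inS S) r = filter (inS S) s"
    have "filter (inS S) (u @ r @ v) \<in> pb_words n"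
      using relators_words[OF pb_rel(3)] pb_rel(1,2) by (intro filter_words) (auto simp: pb_words_def)
    then show ?thesis using e by (simp add: pb_eq.pb_refl)
  next
    assume "\<exists>a b c. filter (inS S) r = P a c @ [(False, (b, c)), (True, (b, c))] \<and>
          filter (inS S) s = [(False, (b, c)), (True, (b, c))] @ P a c \<and>
          (a, c) \<in> pb_gens n \<and> (b, c) \<in> pb_gens n"
    then obtain a b c where e: "filter (inS S) r = P a c @ [(False, (b, c)), (True, (b, c))]"
      "filter (inS S) s = [(False, (b, c)), (True, (b, c))] @ P a c"
      "(a, c) \<in> pb_gens n" "(b, c) \<in> pb_gens n" by blast
    have x: "(False, (b, c)) \<in> pb_letters n" "inv_letter (False, (b, c)) = (True, (b, c))"
      using e(4) by (auto simp: pb_letters_def inv_letter_def)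
    have ac: "?u @ P a c \<in> pb_words n" "P a c @ ?v \<in> pb_words n"
      using uv e(3) by (auto simp: pb_words_def pb_letters_def)
    have 1: "pb_eq n ((?u @ P a c) @ [(False, (b, c)), inv_letter (False, (b, c))] @ ?v) ((?u @ P a c) @ ?v)"
      by (rule pb_cancel[OF ac(1) uv(2) x(1)])
    have 2: "pb_eq n (?u @ [(False, (b, c)), inv_letter (False, (b, c))] @ (P a c @ ?v)) (?u @ (P a c @ ?v))"
      by (rule pb_cancel[OF uv(1) ac(2) x(1)])
    show ?thesis using 1 2 e x(2) by simp (blast intro: pb_eq.pb_sym pb_eq.pb_trans)
  qed
qed

lemma W_filter:
  assumes "w \<in> pb_words n" "cls n w \<in> W n S"
  shows "cls n (filter (inS S) w) = cls n w"
proof -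
  obtain u where u: "cls n w = cls n u" "u \<in> pb_words n" "\<forall>x \<in> set u. inS S x"
    using assms(2) by (auto simp: W_def)
  have "pb_eq n w u" using u assms(1) cls_eq_iff by blast
  then have "pb_eq n (filter (inS S) w) (filter (inS S) u)" by (rule pb_eq_filter)
  moreover have "filter (inS S) u = u" using u(3) by simp
  ultimately have "cls n (filter (inS S) w) = cls n u"
    using cls_eq_iff filter_words assms(1) u(2) by metis
  then show ?thesis using u(1) by simp
qed

lemma inS_Int: "filter (inS A) (filter (inS B) w) = filter (inS (A \<inter> B)) w"
  by (induction w) (auto simp: inS_def)

lemma multi_filter:
  assumes "finite I" "w \<in> pb_words n" "\<forall>i \<in> I. cls n w \<in> W n (S i)"
  shows "cls n (filter (inS (\<Inter>i \<in> I. S i)) w) = cls n w"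
  using assms
proof (induction I rule: finite_induct)
  case empty
  then show ?case by (simp add: inS_def)
next
  case (insert i I)
  let ?w = "filter (inS (\<Inter>i \<in> I. S i)) w"
  have IH: "cls n ?w = cls n w" using insert by simp
  have ww: "?w \<in> pb_words n" using insert(4) by (rule filter_words)
  have "cls n (filter (inS (S i)) ?w) = cls n ?w"
    using W_filter[OF ww] IH insert(5) by simp
  moreover have "filter (inS (S i)) ?w = filter (inS (\<Inter>i \<in> insert i I. S i)) w"
    unfolding inS_Int by simp
  ultimately show ?case using IH by simp
qed

theorem proposition1p2:
  fixes n m :: nat and S :: "nat \<Rightarrow> nat set"
  assumes "\<forall>i \<in> {1..m}. S i \<subseteq> {1..n}"
  shows "carrier (pure_braid_group n) \<inter> (\<Inter>i \<in> {1..m}. P_sub n (S i))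
           = P_sub n ({1..n} \<inter> (\<Inter>i \<in> {1..m}. S i))"
proof
  let ?T = "{1..n} \<inter> (\<Inter>i \<in> {1..m}. S i)"
  show "carrier (pure_braid_group n) \<inter> (\<Inter>i \<in> {1..m}. P_sub n (S i)) \<subseteq> P_sub n ?T"
  proof
    fix X assume X: "X \<in> carrier (pure_braid_group n) \<inter> (\<Inter>i \<in> {1..m}. P_sub n (S i))"
    then obtain w where w: "w \<in> pb_words n" "X = cls n w" by (auto simp: carrier_pb)
    have "\<forall>i \<in> {1..m}. cls n w \<in> W n (S i)" using X w by (auto simp: P_sub_W)
    then have e: "cls n (filter (inS (\<Inter>i \<in> {1..m}. S i)) w) = cls n w"
      using multi_filter[OF _ w(1)] by blast
    have "filter (inS (\<Inter>i \<in> {1..m}. S i)) w = filter (inS ?T) w"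
      using w(1) by (auto simp: pb_words_def pb_letters_def pb_gens_def inS_def intro!: filter_cong)
    then have "cls n (filter (inS ?T) w) = X" using e w by simp
    moreover have "filter (inS ?T) w \<in> pb_words n" using w(1) by (rule filter_words)
    ultimately show "X \<in> P_sub n ?T" unfolding P_sub_W W_def
      by (intro CollectI exI[of _ "filter (inS ?T) w"]) auto
  qed
next
  let ?T = "{1..n} \<inter> (\<Inter>i \<in> {1..m}. S i)"
  show "P_sub n ?T \<subseteq> carrier (pure_braid_group n) \<inter> (\<Inter>i \<in> {1..m}. P_sub n (S i))"
    unfolding P_sub_W W_def carrier_pb by (auto simp: inS_def)
qed

end
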